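(* Let $K\ge 2$, let $s\in(0,1)$, and let $q_1\ge q_2\ge\cdots\ge q_K>0$ satisfy $\sum_{i=1}^K q_i+s=1$. Let $B_1\ge B_2\ge\cdots$ be the base values of all words arranged in non-increasing order, as defined in the context. Put $\alpha_i=\log_{q_1} q_i$, so that $1=\alpha_1\le\alpha_2\le\cdots\le\alpha_K$, and let $R_0>1$ be the unique positive root of $\sum_{i=1}^K X^{-\alpha_i}=1$. Then there is a constant $b\in(0,1)$ such that for every rank $r\ge 1$, $$\frac{b}{R_0}\,B_r^{\log_{q_1}R_0}\;<\;r\;<\;\frac{R_0}{R_0-1}\,B_r^{\log_{q_1}R_0}.$$ Equivalently, writing $-\beta=1/\log_{q_1}R_0=\log q_1/\log R_0$ (so $\beta>0$ and $\beta$ is the solution of $\sum_{i=1}^K q_i^{1/\beta}=1$), there are constants $0<C_1\le C_2$ with $C_1B_r^{-1/\beta}<r<C_2B_r^{-1/\beta}$ for all $r\ge1$.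
   Context: Monkey model: a keyboard has $K$ letters $L_1,\dots,L_K$ struck independently with probabilities $q_1,\dots,q_K$ and a space character with probability $s$. A word is a finite (possibly empty) string $L_{i_1}\cdots L_{i_n}$ of letters ($n\ge0$) followed by a space; it has probability $q_{i_1}\cdots q_{i_n}s$. Its base value is $B=q_{i_1}\cdots q_{i_n}$ (the empty word has base value $1$). The base values of all finitely long words, listed with multiplicity in non-increasing order with ties broken by alphabetical order, are denoted $B_1=1\ge B_2\ge\cdots$; $r$ is called the rank of $B_r$. *)

theory Defs
  imports Complex_Main
begin

text \<open>Monkey model. Letters are L_1, ..., L_K, encoded by the indices 1..K; a word
  (without its trailing space) is a finite list of letter indices.\<close>

definition words :: "nat \<Rightarrow> nat list set" where
  "words K = {w. set w \<subseteq> {1..K}}"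

definition base :: "(nat \<Rightarrow> real) \<Rightarrow> nat list \<Rightarrow> real" where
  "base q w = prod_list (map q w)"

definition alpha_less :: "nat list \<Rightarrow> nat list \<Rightarrow> bool" where
  "alpha_less v w \<longleftrightarrow> (v, w) \<in> lexord {(a, b). a < b}"

definition word_rank :: "(nat \<Rightarrow> real) \<Rightarrow> nat \<Rightarrow> nat list \<Rightarrow> nat" where
  "word_rank q K w = card {v \<in> words K. base q v > base q w \<or>
                                       (base q v = base q w \<and> alpha_less v w)} + 1"

definition sorted_base :: "(nat \<Rightarrow> real) \<Rightarrow> nat \<Rightarrow> nat \<Rightarrow> real" where
  "sorted_base q K r = base q (THE w. w \<in> words K \<and> word_rank q K w = r)"

end

theory Submission
  imports Defs
begin


lemma alpha_less_irrefl: "\<not> alpha_less v v"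
  unfolding alpha_less_def by (rule lexord_irreflexive) auto

lemma alpha_less_trans: "alpha_less u v \<Longrightarrow> alpha_less v w \<Longrightarrow> alpha_less u w"
  unfolding alpha_less_def by (erule lexord_trans) (auto simp: trans_def)

lemma alpha_less_total: "alpha_less u v \<or> u = v \<or> alpha_less v u"
  unfolding alpha_less_def by (rule lexord_linear) auto

definition prec where "prec q v w \<longleftrightarrow> base q v > base q w \<or> (base q v = base q w \<and> alpha_less v w)"

lemma prec_irrefl: "\<not> prec q v v" by (simp add: prec_def alpha_less_irrefl)
lemma prec_trans: "prec q u v \<Longrightarrow> prec q v w \<Longrightarrow> prec q u w"
  unfolding prec_def using alpha_less_trans by force
lemma prec_total: "prec q u v \<or> u = v \<or> prec q v u"
  unfolding prec_def using alpha_less_total by force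

lemma word_rank_prec: "word_rank q K w = card {v \<in> words K. prec q v w} + 1"
  by (simp add: word_rank_def prec_def)

lemma base_Cons[simp]: "base q (i # w) = q i * base q w" by (simp add: base_def)
lemma base_Nil[simp]: "base q [] = 1" by (simp add: base_def)

lemma base_bounds:
  assumes "\<forall>i\<in>{1..K}. 0 < q i \<and> q i \<le> q 1"
  shows "set w \<subseteq> {1..K} \<Longrightarrow> 0 < base q w \<and> base q w \<le> q 1 ^ length w"
proof (induction w)
  case Nil then show ?case by simp
next
  case (Cons a w)
  then have "0 < q a" "q a \<le> q 1" using assms by auto
  with Cons show ?case by (auto intro: mult_mono)
qed

lemma len_bound:
  assumes "\<forall>i\<in>{1..K}. 0 < q i \<and> q i \<le> q 1" "q 1 < 1" "0 < q 1" "q 1 ^ n < x"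
    "set v \<subseteq> {1..K}" "x \<le> base q v"
  shows "length v \<le> n"
proof (rule ccontr)
  assume "\<not> length v \<le> n"
  then have "q 1 ^ length v \<le> q 1 ^ n" using assms by (intro power_decreasing) auto
  moreover have "base q v \<le> q 1 ^ length v" using base_bounds[OF assms(1) assms(5)] by simp
  ultimately show False using assms by linarith
qed

lemma finite_ge:
  assumes "\<forall>i\<in>{1..K}. 0 < q i \<and> q i \<le> q 1" "q 1 < 1" "0 < q 1" "x > 0"
  shows "finite {v \<in> words K. x \<le> base q v}"
proof -
  obtain n where n: "q 1 ^ n < x" using real_arch_pow_inv assms by blast
  have "{v \<in> words K. x \<le> base q v} \<subseteq> {v. set v \<subseteq> {1..K} \<and> length v \<le> n}"
    using len_bound[OF assms(1-3) n] by (auto simp: words_def)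
  then show ?thesis using finite_lists_length_le[of "{1..K}" n] finite_subset by blast
qed

lemma finite_pred:
  assumes "\<forall>i\<in>{1..K}. 0 < q i \<and> q i \<le> q 1" "q 1 < 1" "0 < q 1" "w \<in> words K"
  shows "finite {v \<in> words K. prec q v w}"
proof -
  have "0 < base q w" using base_bounds[OF assms(1)] assms(4) by (auto simp: words_def)
  moreover have "{v \<in> words K. prec q v w} \<subseteq> {v \<in> words K. base q w \<le> base q v}"
    by (auto simp: prec_def)
  ultimately show ?thesis using finite_ge[OF assms(1-3)] finite_subset by blast
qed

lemma rank_mono:
  assumes "\<forall>i\<in>{1..K}. 0 < q i \<and> q i \<le> q 1" "q 1 < 1" "0 < q 1" "w \<in> words K" "v \<in> words K"
    "prec q v w"
  shows "word_rank q K v < word_rank q K w"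
proof -
  have "{u \<in> words K. prec q u v} \<subset> {u \<in> words K. prec q u w}"
    using assms(4-6) prec_trans prec_irrefl by blast
  then show ?thesis unfolding word_rank_prec using finite_pred[OF assms(1-4)]
    by (simp add: psubset_card_mono)
qed

lemma rank_inj:
  assumes "\<forall>i\<in>{1..K}. 0 < q i \<and> q i \<le> q 1" "q 1 < 1" "0 < q 1" "w \<in> words K" "v \<in> words K"
    "word_rank q K v = word_rank q K w"
  shows "v = w"
proof (rule ccontr)
  assume "v \<noteq> w"
  then have "prec q v w \<or> prec q w v" using prec_total[of q v w] by blast
  then show False using rank_mono[OF assms(1-5)] rank_mono[OF assms(1-3,5,4)] assms(6) by fastforce
qed

lemma rank_down:
  assumes "\<forall>i\<in>{1..K}. 0 < q i \<and> q i \<le> q 1" "q 1 < 1" "0 < q 1" "w \<in> words K"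
    "word_rank q K w = Suc (Suc m)"
  shows "\<exists>v\<in>words K. word_rank q K v = Suc m"
proof -
  let ?P = "{u \<in> words K. prec q u w}"
  have fin: "finite ?P" by (rule finite_pred[OF assms(1-4)])
  have "card ?P = Suc m" using assms(5) unfolding word_rank_prec by simp
  then have ne: "?P \<noteq> {}" by force
  define M where "M = Max (word_rank q K ` ?P)"
  have "M \<in> word_rank q K ` ?P" unfolding M_def using fin ne by (intro Max_in) auto
  then obtain v where v1: "v \<in> ?P" "word_rank q K v = M" by blast
  have v2: "\<forall>u\<in>?P. word_rank q K u \<le> word_rank q K v"
    using fin v1(2) unfolding M_def by auto
  note v = v1(1) v2
  have "{u \<in> words K. prec q u v} = ?P - {v}"
  proof
    show "{u \<in> words K. prec q u v} \<subseteq> ?P - {v}" using v(1) prec_trans prec_irrefl by blast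
    show "?P - {v} \<subseteq> {u \<in> words K. prec q u v}"
    proof
      fix u assume u: "u \<in> ?P - {v}"
      have "\<not> prec q v u" using rank_mono[OF assms(1-3), of u v] u v by force
      then show "u \<in> {u \<in> words K. prec q u v}" using prec_total[of q u v] u by auto
    qed
  qed
  then have "word_rank q K v = Suc m" using fin v(1) assms(5) unfolding word_rank_prec
    by (simp add: card_Diff_singleton)
  then show ?thesis using v(1) by blast
qed

lemma rank_exists:
  assumes "\<forall>i\<in>{1..K}. 0 < q i \<and> q i \<le> q 1" "q 1 < 1" "0 < q 1" "K \<ge> 1"
  shows "r \<ge> 1 \<Longrightarrow> \<exists>w\<in>words K. word_rank q K w = r"
proof -
  have down: "\<And>k m. (\<exists>w\<in>words K. word_rank q K w = Suc m + k) \<Longrightarrow> \<exists>w\<in>words K. word_rank q K w = Suc m"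
  proof -
    fix k m show "(\<exists>w\<in>words K. word_rank q K w = Suc m + k) \<Longrightarrow> \<exists>w\<in>words K. word_rank q K w = Suc m"
    proof (induction k)
      case 0 then show ?case by simp
    next
      case (Suc k)
      then obtain w where "w \<in> words K" "word_rank q K w = Suc (Suc (m + k))" by auto
      then show ?case using rank_down[OF assms(1-3)] Suc.IH by force
    qed
  qed
  have big: "\<exists>w\<in>words K. word_rank q K w \<ge> r" for r
  proof -
    have "replicate r 1 \<in> words K" using assms(4) by (auto simp: words_def)
    moreover have "{v \<in> words K. prec q v (replicate r 1)} \<supseteq> (\<lambda>j. replicate j 1) ` {..<r}"
    proof
      fix u :: "nat list" assume "u \<in> (\<lambda>j. replicate j 1) ` {..<r}"
      then obtain j where j: "j < r" "u = replicate j 1" by auto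
      have "q 1 ^ r < q 1 ^ j" using j assms by (intro power_strict_decreasing) auto
      moreover have "base q (replicate k 1) = q 1 ^ k" for k by (simp add: base_def)
      ultimately show "u \<in> {v \<in> words K. prec q v (replicate r 1)}"
        using j assms(4) by (auto simp: words_def prec_def)
    qed
    moreover have "card ((\<lambda>j. replicate j (1::nat)) ` {..<r}) = r"
      by (subst card_image) (auto simp: inj_on_def)
    moreover have "card ((\<lambda>j. replicate j (1::nat)) ` {..<r}) \<le> card {v \<in> words K. prec q v (replicate r 1)}"
      using calculation by (intro card_mono[OF finite_pred[OF assms(1-3)]]) auto
    ultimately show ?thesis unfolding word_rank_prec by (intro bexI[of _ "replicate r 1"]) auto
  qed
  assume "r \<ge> 1"
  then obtain m where m: "r = Suc m" by (cases r) auto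
  obtain w where "w \<in> words K" "word_rank q K w \<ge> r" using big by blast
  then show ?thesis using down[of m "word_rank q K w - r"] m by force
qed



definition Sn :: "(nat \<Rightarrow> real) \<Rightarrow> nat \<Rightarrow> nat \<Rightarrow> (real \<Rightarrow> bool) \<Rightarrow> nat list set" where
  "Sn q K n P = {w. set w \<subseteq> {1..K} \<and> length w \<le> n \<and> P (base q w)}"

lemma Sn_finite: "finite (Sn q K n P)"
  unfolding Sn_def by (rule finite_subset[OF _ finite_lists_length_le[of "{1..K}" n]]) auto

lemma Sn_0: "Sn q K 0 P = (if P 1 then {[]} else {})"
  unfolding Sn_def by auto

lemma Sn_Suc: "Sn q K (Suc n) P = (if P 1 then {[]} else {}) \<union>
   (\<Union>i\<in>{1..K}. Cons i ` Sn q K n (\<lambda>b. P (q i * b)))"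
proof -
  have "Sn q K (Suc n) P = {w \<in> Sn q K (Suc n) P. w = []} \<union> {w \<in> Sn q K (Suc n) P. w \<noteq> []}" by auto
  also have "{w \<in> Sn q K (Suc n) P. w = []} = (if P 1 then {[]} else {})" by (auto simp: Sn_def)
  also have "{w \<in> Sn q K (Suc n) P. w \<noteq> []} = (\<Union>i\<in>{1..K}. Cons i ` Sn q K n (\<lambda>b. P (q i * b)))"
  proof
    show "{w \<in> Sn q K (Suc n) P. w \<noteq> []} \<subseteq> (\<Union>i\<in>{1..K}. Cons i ` Sn q K n (\<lambda>b. P (q i * b)))"
    proof
      fix w assume "w \<in> {w \<in> Sn q K (Suc n) P. w \<noteq> []}"
      then obtain i u where "w = i # u" "w \<in> Sn q K (Suc n) P" by (cases w) auto
      then show "w \<in> (\<Union>i\<in>{1..K}. Cons i ` Sn q K n (\<lambda>b. P (q i * b)))"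
        by (auto simp: Sn_def)
    qed
    show "(\<Union>i\<in>{1..K}. Cons i ` Sn q K n (\<lambda>b. P (q i * b))) \<subseteq> {w \<in> Sn q K (Suc n) P. w \<noteq> []}"
      by (auto simp: Sn_def)
  qed
  finally show ?thesis .
qed

lemma card_Sn_Suc: "card (Sn q K (Suc n) P) = (if P 1 then 1 else 0) +
   (\<Sum>i=1..K. card (Sn q K n (\<lambda>b. P (q i * b))))"
proof -
  have d: "(if P 1 then {[]} else {}) \<inter> (\<Union>i\<in>{1..K}. Cons i ` Sn q K n (\<lambda>b. P (q i * b))) = {}" by auto
  have "card (\<Union>i\<in>{1..K}. Cons i ` Sn q K n (\<lambda>b. P (q i * b))) = (\<Sum>i=1..K. card (Cons i ` Sn q K n (\<lambda>b. P (q i * b))))"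
    by (rule card_UN_disjoint) (auto simp: Sn_finite)
  also have "\<dots> = (\<Sum>i=1..K. card (Sn q K n (\<lambda>b. P (q i * b))))"
    by (intro sum.cong refl card_image) (auto simp: inj_on_def)
  finally have "card (\<Union>i\<in>{1..K}. Cons i ` Sn q K n (\<lambda>b. P (q i * b))) = (\<Sum>i=1..K. card (Sn q K n (\<lambda>b. P (q i * b))))" .
  then show ?thesis unfolding Sn_Suc
    by (subst card_Un_disjoint[OF _ _ d]) (auto simp: Sn_finite)
qed



lemma powr_div_neg: fixes x y g :: real shows "0 < x \<Longrightarrow> 0 < y \<Longrightarrow> (x / y) powr (- g) = x powr (- g) * y powr g"
  by (subst powr_divide) (simp add: powr_minus divide_inverse)

lemma Sn_cong_div:
  assumes "0 < c"
  shows "Sn q K n (\<lambda>b. x \<le> c * b) = Sn q K n (\<lambda>b. x / c \<le> b)"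
    and "Sn q K n (\<lambda>b. x < c * b) = Sn q K n (\<lambda>b. x / c < b)"
  using assms by (simp_all add: pos_divide_le_eq pos_divide_less_eq mult.commute)

lemma A_nonneg: assumes "A * (1 - c) = (1::real)" "c \<le> 1" shows "A \<ge> 0"
proof (rule ccontr)
  assume "\<not> A \<ge> 0"
  then have "A * (1 - c) \<le> 0" using assms(2) by (simp add: mult_nonpos_nonneg)
  then show False using assms(1) by simp
qed

lemma upper_count:
  assumes qpos: "\<forall>i\<in>{1..K}. 0 < q i \<and> q i \<le> q 1" and g: "\<gamma> > 0"
    and sumg: "(\<Sum>i=1..K. q i powr \<gamma>) = 1" and A: "A * (1 - q 1 powr \<gamma>) = 1"
    and c1: "q 1 powr \<gamma> \<le> 1" and K: "K \<ge> 1"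
  shows "\<forall>x>0. real (card (Sn q K n (\<lambda>b. x \<le> b))) \<le> A * (x powr (-\<gamma>) - min (x powr (-\<gamma>)) (q 1 powr \<gamma>))"
proof (induction n)
  note A0 = A_nonneg[OF A c1]
  case 0
  show ?case
  proof (intro allI impI)
    fix x :: real assume x: "x > 0"
    show "real (card (Sn q K 0 (\<lambda>b. x \<le> b))) \<le> A * (x powr (-\<gamma>) - min (x powr (-\<gamma>)) (q 1 powr \<gamma>))"
    proof (cases "x \<le> 1")
      case True
      have "x powr \<gamma> \<le> 1" using True x g by (simp add: powr_le1)
      then have a1: "x powr (-\<gamma>) \<ge> 1" using x by (simp add: powr_minus one_le_inverse_iff) 
      then have "A * (x powr (-\<gamma>) - min (x powr (-\<gamma>)) (q 1 powr \<gamma>)) \<ge> A * (1 - q 1 powr \<gamma>)"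
        using c1 A0 by (intro mult_left_mono) auto
      then show ?thesis using True A by (simp add: Sn_0)
    next
      case False
      then show ?thesis using A0 by (simp add: Sn_0)
    qed
  qed
next
  note A0 = A_nonneg[OF A c1]
  case (Suc n)
  show ?case
  proof (intro allI impI)
    fix x :: real assume x: "x > 0"
    let ?a = "x powr (-\<gamma>)" and ?c = "q 1 powr \<gamma>"
    have qi: "0 < q i" "q i \<le> q 1" if "i \<in> {1..K}" for i using qpos that by auto
    have "real (card (Sn q K (Suc n) (\<lambda>b. x \<le> b))) = (if x \<le> 1 then 1 else 0) +
        (\<Sum>i=1..K. real (card (Sn q K n (\<lambda>b. x / q i \<le> b))))"
      unfolding card_Sn_Suc using Sn_cong_div(1)[OF qi(1)] by simp
    also have "\<dots> \<le> (if x \<le> 1 then 1 else 0) +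
        (\<Sum>i=1..K. A * (?a * q i powr \<gamma> - min (?a * q i powr \<gamma>) ?c))"
    proof (intro add_left_mono sum_mono)
      fix i assume i: "i \<in> {1..K}"
      have "x / q i > 0" using qi[OF i] x by simp
      then have "real (card (Sn q K n (\<lambda>b. x / q i \<le> b))) \<le> A * ((x / q i) powr (-\<gamma>) - min ((x / q i) powr (-\<gamma>)) ?c)"
        using Suc.IH by blast
      then show "real (card (Sn q K n (\<lambda>b. x / q i \<le> b))) \<le> A * (?a * q i powr \<gamma> - min (?a * q i powr \<gamma>) ?c)"
        using powr_div_neg[OF x qi(1)[OF i]] by simp
    qed
    also have "\<dots> = (if x \<le> 1 then 1 else 0) + A * ?a - A * (\<Sum>i=1..K. min (?a * q i powr \<gamma>) ?c)"
    proof -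
      have "(\<Sum>i=1..K. A * (?a * q i powr \<gamma> - min (?a * q i powr \<gamma>) ?c)) =
          A * (?a * (\<Sum>i=1..K. q i powr \<gamma>)) - A * (\<Sum>i=1..K. min (?a * q i powr \<gamma>) ?c)"
        by (simp add: right_diff_distrib sum_subtractf sum_distrib_left)
      then show ?thesis using sumg by simp
    qed
    also have "\<dots> \<le> A * (?a - min ?a ?c)"
    proof (cases "x \<le> 1")
      case True
      have "x powr \<gamma> \<le> 1" using True x g by (simp add: powr_le1)
      then have a1: "?a \<ge> 1" using x by (simp add: powr_minus one_le_inverse_iff)
      have "q i powr \<gamma> \<le> min (?a * q i powr \<gamma>) ?c" if "i \<in> {1..K}" for i
      proof -
        have "q i powr \<gamma> \<le> ?a * q i powr \<gamma>" using mult_right_mono[OF a1, of "q i powr \<gamma>"] by simp 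
        moreover have "q i powr \<gamma> \<le> ?c" using qi[OF that] g by (intro powr_mono2) auto
        ultimately show ?thesis by simp
      qed
      then have "1 \<le> (\<Sum>i=1..K. min (?a * q i powr \<gamma>) ?c)" using sumg sum_mono[of "{1..K}" "\<lambda>i. q i powr \<gamma>"] by simp
      then have "A \<le> A * (\<Sum>i=1..K. min (?a * q i powr \<gamma>) ?c)" using A0 mult_left_mono[of 1 _ A] by simp
      moreover have "min ?a ?c = ?c" using a1 c1 by simp
      ultimately show ?thesis using True A by (simp add: algebra_simps)
    next
      case False
      have "1 \<le> x powr \<gamma>" using False g by (intro ge_one_powr_ge_zero) auto
      then have a1: "?a \<le> 1" using x by (simp add: powr_minus inverse_le_1_iff)
      have "min (?a * q i powr \<gamma>) ?c = ?a * q i powr \<gamma>" if "i \<in> {1..K}" for i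
      proof -
        have "?a * q i powr \<gamma> \<le> q i powr \<gamma>" using a1 by (simp add: mult_left_le_one_le)
        moreover have "q i powr \<gamma> \<le> ?c" using qi[OF that] g by (intro powr_mono2) auto
        ultimately show ?thesis by simp
      qed
      then have "(\<Sum>i=1..K. min (?a * q i powr \<gamma>) ?c) = ?a"
        using sumg by (simp add: sum_distrib_left[symmetric])
      moreover have "min ?a ?c \<le> ?a" by simp
      ultimately show ?thesis using False A0 by (simp add: algebra_simps mult_left_mono)
    qed
    finally show "real (card (Sn q K (Suc n) (\<lambda>b. x \<le> b))) \<le> A * (?a - min ?a ?c)" .
  qed
qed



lemma lower_count:
  assumes qpos: "\<forall>i\<in>{1..K}. 0 < q i \<and> q i \<le> q 1" and g: "\<gamma> > 0"
    and sumg: "(\<Sum>i=1..K. q i powr \<gamma>) = 1" and K: "K \<ge> 1"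
  shows "\<forall>y. q 1 ^ n < y \<longrightarrow> (real K - 1) * real (card (Sn q K n (\<lambda>b. y < b))) + 1 \<ge> y powr (-\<gamma>)"
proof (induction n)
  have K1: "real K - 1 \<ge> 0" using K by simp
  case 0
  show ?case
  proof (intro allI impI)
    fix y :: real assume "q 1 ^ 0 < y"
    then have y: "y > 1" by simp
    have "1 \<le> y powr \<gamma>" using y g by (intro ge_one_powr_ge_zero) auto
    then have "y powr (-\<gamma>) \<le> 1" by (simp add: powr_minus inverse_le_1_iff)
    then show "(real K - 1) * real (card (Sn q K 0 (\<lambda>b. y < b))) + 1 \<ge> y powr (-\<gamma>)"
      using K1 by (smt (verit) of_nat_0_le_iff zero_le_mult_iff)
  qed
next
  have K1: "real K - 1 \<ge> 0" using K by simp
  case (Suc n)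
  show ?case
  proof (intro allI impI)
    fix y :: real assume yn: "q 1 ^ Suc n < y"
    have qi: "0 < q i" "q i \<le> q 1" if "i \<in> {1..K}" for i using qpos that by auto
    have q1: "0 < q 1" using qi[of 1] K by auto
    have y0: "y > 0" using yn q1 by (meson less_trans zero_less_power)
    show "(real K - 1) * real (card (Sn q K (Suc n) (\<lambda>b. y < b))) + 1 \<ge> y powr (-\<gamma>)"
    proof (cases "y \<ge> 1")
      case True
      have "1 \<le> y powr \<gamma>" using True g by (intro ge_one_powr_ge_zero) auto
      then have "y powr (-\<gamma>) \<le> 1" by (simp add: powr_minus inverse_le_1_iff)
      then show ?thesis using K1 by (smt (verit) of_nat_0_le_iff zero_le_mult_iff)
    next
      case False
      have IH: "(real K - 1) * real (card (Sn q K n (\<lambda>b. y / q i < b))) + 1 \<ge> y powr (-\<gamma>) * q i powr \<gamma>"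
        if i: "i \<in> {1..K}" for i
      proof -
        have "q 1 ^ n * q 1 < y" using yn by (simp add: mult.commute)
        then have "q 1 ^ n < y / q 1" using q1 by (simp add: pos_less_divide_eq)
        also have "y / q 1 \<le> y / q i" using qi[OF i] y0 by (intro divide_left_mono) auto
        finally have "q 1 ^ n < y / q i" .
        then show ?thesis using Suc.IH powr_div_neg[OF y0 qi(1)[OF i]] by metis
      qed
      have "real (card (Sn q K (Suc n) (\<lambda>b. y < b))) = 1 +
          (\<Sum>i=1..K. real (card (Sn q K n (\<lambda>b. y / q i < b))))"
        unfolding card_Sn_Suc using Sn_cong_div(2)[OF qi(1)] False by simp
      then have "(real K - 1) * real (card (Sn q K (Suc n) (\<lambda>b. y < b))) + 1 =
          (\<Sum>i=1..K. (real K - 1) * real (card (Sn q K n (\<lambda>b. y / q i < b))) + 1)"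
      proof -
        let ?S = "\<Sum>i=1..K. real (card (Sn q K n (\<lambda>b. y / q i < b)))"
        have "(\<Sum>i=1..K. (real K - 1) * real (card (Sn q K n (\<lambda>b. y / q i < b))) + 1) = (real K - 1) * ?S + real K"
          by (simp add: sum.distrib sum_distrib_left)
        then show ?thesis using \<open>real (card (Sn q K (Suc n) (\<lambda>b. y < b))) = 1 + ?S\<close>
          by (simp add: algebra_simps)
      qed
      also have "\<dots> \<ge> (\<Sum>i=1..K. y powr (-\<gamma>) * q i powr \<gamma>)"
        using IH by (intro sum_mono) auto
      finally show ?thesis using sumg by (simp add: sum_distrib_left[symmetric])
    qed
  qed
qed



theorem mainTheorem1:
  fixes K :: nat and q :: "nat \<Rightarrow> real" and s R0 :: real
  assumes "K \<ge> 2"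
    and "0 < s" and "s < 1"
    and "\<And>i j. 1 \<le> i \<Longrightarrow> i \<le> j \<Longrightarrow> j \<le> K \<Longrightarrow> q j \<le> q i"
    and "\<And>i. 1 \<le> i \<Longrightarrow> i \<le> K \<Longrightarrow> q i > 0"
    and "(\<Sum>i=1..K. q i) + s = 1"
    and "R0 > 0"
    and "(\<Sum>i=1..K. R0 powr (- log (q 1) (q i))) = 1"
  shows "\<exists>b. 0 < b \<and> b < 1 \<and>
           (\<forall>r::nat. r \<ge> 1 \<longrightarrow>
              b / R0 * sorted_base q K r powr (log (q 1) R0) < real r \<and>
              real r < R0 / (R0 - 1) * sorted_base q K r powr (log (q 1) R0))"
proof -
  have K1: "K \<ge> 1" using assms(1) by simp
  have qpos: "\<forall>i\<in>{1..K}. 0 < q i \<and> q i \<le> q 1" using assms(4,5) by auto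
  have q1: "0 < q 1" using qpos K1 by auto
  have qlt1: "q i < 1" if i: "i \<in> {1..K}" for i
  proof -
    have "q i \<le> (\<Sum>i=1..K. q i)" using i qpos by (intro member_le_sum) (auto simp: less_imp_le)
    then show ?thesis using assms(2,6) by linarith
  qed
  have q1lt: "q 1 < 1" using qlt1[of 1] K1 by auto
  define \<gamma> where "\<gamma> = - log (q 1) R0"
  have hq: "R0 powr (- log (q 1) (q i)) = q i powr \<gamma>" if i: "i \<in> {1..K}" for i
  proof -
    have "q i > 0" using qpos i by auto
    then show ?thesis using assms(7) unfolding \<gamma>_def by (simp add: powr_def log_def field_simps)
  qed
  have sumg: "(\<Sum>i=1..K. q i powr \<gamma>) = 1" using assms(8) hq by simp
  have g: "\<gamma> > 0"
  proof (rule ccontr)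
    assume "\<not> \<gamma> > 0"
    then have "1 \<le> q i powr \<gamma>" if i: "i \<in> {1..K}" for i
    proof -
      have "0 < q i" using qpos i by auto
      then have "q i powr (-\<gamma>) \<le> 1" using \<open>\<not> \<gamma> > 0\<close> qlt1[OF i] by (intro powr_le1) auto
      moreover have "q i powr (-\<gamma>) > 0" using \<open>0 < q i\<close> by simp
      moreover have "q i powr \<gamma> > 0" using \<open>0 < q i\<close> by simp
      ultimately show ?thesis by (simp add: powr_minus inverse_le_1_iff)
    qed
    then have "(\<Sum>i=1..K. (1::real)) \<le> (\<Sum>i=1..K. q i powr \<gamma>)" by (intro sum_mono) auto
    then show False using sumg assms(1) by simp
  qed
  have lnq1: "ln (q 1) < 0" using q1 q1lt by simp
  have R1: "R0 > 1"
  proof -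
    have "ln R0 / ln (q 1) < 0" using g unfolding \<gamma>_def log_def by simp
    then have "ln R0 > 0" using lnq1 by (simp add: divide_less_0_iff)
    then show ?thesis using assms(7) by (simp add: ln_gt_zero_iff)
  qed
  have c: "q 1 powr \<gamma> = 1 / R0" unfolding \<gamma>_def
    using q1 q1lt assms(7) by (simp add: powr_minus powr_log_cancel divide_inverse)
  define A where "A = R0 / (R0 - 1)"
  have A: "A * (1 - q 1 powr \<gamma>) = 1" unfolding c A_def using R1 by (simp add: field_simps)
  have A0: "A > 0" unfolding A_def using R1 by simp
  have c1: "q 1 powr \<gamma> \<le> 1" using c R1 by simp
  have cpos: "q 1 powr \<gamma> > 0" using q1 by simp
  define b where "b = 1 / (2 * real K)"
  have b0: "0 < b" "b < 1" unfolding b_def using assms(1) by auto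
  have bK: "b / R0 < 1 / (real K - 1)"
  proof -
    have "b / R0 < b" using b0 R1 by (simp add: divide_less_eq)
    also have "b \<le> 1 / (real K - 1)" unfolding b_def using assms(1)
      by (intro divide_left_mono) auto
    finally show ?thesis .
  qed
  have main: "b / R0 * sorted_base q K r powr (log (q 1) R0) < real r \<and>
              real r < R0 / (R0 - 1) * sorted_base q K r powr (log (q 1) R0)" if r: "r \<ge> 1" for r
  proof -
    obtain w where w: "w \<in> words K" "word_rank q K w = r"
      using rank_exists[OF qpos q1lt q1 K1 r] by blast
    have the: "(THE w. w \<in> words K \<and> word_rank q K w = r) = w"
    proof (rule the_equality)
      show "w \<in> words K \<and> word_rank q K w = r" using w by simp
      fix y assume "y \<in> words K \<and> word_rank q K y = r"
      then show "y = w" using rank_inj[OF qpos q1lt q1, of w y] w by simp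
    qed
    define B where "B = base q w"
    have Bb: "0 < B" "B \<le> q 1 ^ length w" using base_bounds[OF qpos] w(1) unfolding B_def words_def by auto
    have "q 1 ^ length w \<le> 1" using q1 q1lt by (simp add: power_le_one)
    then have B1: "B \<le> 1" using Bb by linarith
    have SB: "sorted_base q K r powr (log (q 1) R0) = B powr (-\<gamma>)"
      unfolding sorted_base_def the B_def \<gamma>_def by simp
    let ?P = "{v \<in> words K. prec q v w}"
    have rP: "real r = real (card ?P) + 1" using w(2) unfolding word_rank_prec by simp
    have finP: "finite ?P" by (rule finite_pred[OF qpos q1lt q1 w(1)])
    have "B powr \<gamma> \<le> 1" using B1 Bb g by (simp add: powr_le1)
    then have a1: "B powr (-\<gamma>) \<ge> 1" using Bb by (simp add: powr_minus one_le_inverse_iff)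
    obtain n where n: "q 1 ^ n < B" using real_arch_pow_inv[OF Bb(1) q1lt] by blast
    have finG: "finite {v \<in> words K. B \<le> base q v}" by (rule finite_ge[OF qpos q1lt q1 Bb(1)])
    have "insert w ?P \<subseteq> {v \<in> words K. B \<le> base q v}" using w(1) unfolding B_def prec_def by auto
    moreover have "w \<notin> ?P" using prec_irrefl by blast
    ultimately have "card ?P + 1 \<le> card {v \<in> words K. B \<le> base q v}"
    proof -
      assume a: "insert w ?P \<subseteq> {v \<in> words K. B \<le> base q v}" "w \<notin> ?P"
      have "card (insert w ?P) \<le> card {v \<in> words K. B \<le> base q v}" by (rule card_mono[OF finG a(1)])
      moreover have "card (insert w ?P) = card ?P + 1" using finP a(2) by simp
      ultimately show ?thesis by simp
    qed
    moreover have "{v \<in> words K. B \<le> base q v} = Sn q K n (\<lambda>b. B \<le> b)"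
      using len_bound[OF qpos q1lt q1 n] unfolding Sn_def words_def by auto
    ultimately have "real r \<le> real (card (Sn q K n (\<lambda>b. B \<le> b)))" using rP by simp
    also have "\<dots> \<le> A * (B powr (-\<gamma>) - min (B powr (-\<gamma>)) (q 1 powr \<gamma>))"
      using upper_count[OF qpos g sumg A c1 K1] Bb(1) by blast
    also have "\<dots> < A * B powr (-\<gamma>)" using a1 c1 cpos A0 by simp
    finally have up: "real r < A * B powr (-\<gamma>)" .
    have "Sn q K n (\<lambda>b. B < b) \<subseteq> ?P" unfolding Sn_def words_def prec_def B_def by auto
    then have "card (Sn q K n (\<lambda>b. B < b)) \<le> card ?P" using card_mono[OF finP] by blast
    then have M: "real (card (Sn q K n (\<lambda>b. B < b))) + 1 \<le> real r" using rP by simp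
    have "(real K - 1) * real (card (Sn q K n (\<lambda>b. B < b))) + 1 \<ge> B powr (-\<gamma>)"
      using lower_count[OF qpos g sumg K1] n by blast
    moreover have "(real K - 1) * real (card (Sn q K n (\<lambda>b. B < b))) + 1 \<le> (real K - 1) * real r"
    proof -
      have "(real K - 1) * real (card (Sn q K n (\<lambda>b. B < b))) + 1 \<le>
            (real K - 1) * real (card (Sn q K n (\<lambda>b. B < b))) + (real K - 1)" using assms(1) by simp
      also have "\<dots> = (real K - 1) * (real (card (Sn q K n (\<lambda>b. B < b))) + 1)" by (simp add: algebra_simps)
      also have "\<dots> \<le> (real K - 1) * real r" using M assms(1) by (intro mult_left_mono) auto
      finally show ?thesis .
    qed
    ultimately have "B powr (-\<gamma>) \<le> (real K - 1) * real r" by linarith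
    then have lo1: "B powr (-\<gamma>) / (real K - 1) \<le> real r" using assms(1) by (simp add: divide_le_eq mult.commute)
    have "b / R0 * B powr (-\<gamma>) < 1 / (real K - 1) * B powr (-\<gamma>)"
      using bK a1 by (intro mult_strict_right_mono) auto
    then have lo: "b / R0 * B powr (-\<gamma>) < real r" using lo1 by simp
    show ?thesis using up lo unfolding SB A_def by simp
  qed
  show ?thesis using b0 main by blast
qed

end
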